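(* Let $t,\ q\in(0,\infty)$ and let $\Phi$ be an Orlicz function with positive lower type $p_{\Phi}^-$ and positive upper type $p_{\Phi}^+$. Then $(E_\Phi^q)_t(\mathbb{R}^n)$ and $\ell^q(L^\Phi_t)(\mathbb{R}^n)$ coincide and, for any $f\in(E_\Phi^q)_t(\mathbb{R}^n)$, $$\left[t^{n}\sum_{k\in\mathbb{Z}^n}\|f\chi_{Q_{tk}}\|^q_{L^\Phi(\mathbb{R}^n)}\right]^{1/q}\sim\left\{\int_{\mathbb{R}^n}\|f\chi_{B(x,t)}\|_{L^\Phi(\mathbb{R}^n)}^q\,dx\right\}^{1/q},$$ where the equivalence constants are independent of $f$ and $t$.
   Context: An Orlicz function is a non-decreasing $\Phi:[0,\infty)\to[0,\infty)$ with $\Phi(0)=0$, $\Phi(\tau)>0$ for $\tau>0$, $\lim_{\tau\to\infty}\Phi(\tau)=\infty$; it is of lower (resp. upper) type $p$ if there is $C_{(p)}>0$ with $\Phi(s\tau)\le C_{(p)}s^p\Phi(\tau)$ for all $\tau\ge0$ and $s\in(0,1)$ (resp. $s\ge1$); positive type means type $p$ for some $p>0$. $\|f\|_{L^\Phi(\mathbb{R}^n)}:=\inf\{\lambda>0:\int_{\mathbb{R}^n}\Phi(|f(x)|/\lambda)\,dx\le1\}$. $(E_\Phi^q)_t(\mathbb{R}^n)$ is the set of measurable $f$ with $\|f\|_{(E_\Phi^q)_t(\mathbb{R}^n)}:=\{\int_{\mathbb{R}^n}[\|f\chi_{B(x,t)}\|_{L^\Phi}/\|\chi_{B(x,t)}\|_{L^\Phi}]^q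 dx\}^{1/q}<\infty$, $B(x,t)$ the open ball. For $k\in\mathbb{Z}^n$, $Q_{tk}:=t[k+[0,1)^n]$, and the Orlicz-amalgam space $\ell^q(L^\Phi_t)(\mathbb{R}^n)$ is the set of measurable $f$ with $\|f\|_{\ell^q(L^\Phi_t)(\mathbb{R}^n)}:=[\sum_{k\in\mathbb{Z}^n}\|f\chi_{Q_{tk}}\|^q_{L^\Phi(\mathbb{R}^n)}]^{1/q}<\infty$. $A\sim B$ means $C^{-1}B\le A\le CB$ for a positive constant $C$. *)

theory Defs
  imports "HOL-Analysis.Analysis"
begin

text \<open>Real powers of extended nonnegative reals (\<open>\<infinity>\<close> stays \<open>\<infinity>\<close>); used only with positive exponents.\<close>
definition ennpow :: "ennreal \<Rightarrow> real \<Rightarrow> ennreal" where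
  "ennpow x a = (if x = \<infinity> then \<infinity> else ennreal (enn2real x powr a))"

definition orlicz_function :: "(real \<Rightarrow> real) \<Rightarrow> bool" where
  "orlicz_function \<Phi> \<longleftrightarrow>
     (\<forall>s \<tau>. 0 \<le> s \<and> s \<le> \<tau> \<longrightarrow> \<Phi> s \<le> \<Phi> \<tau>) \<and>
     \<Phi> 0 = 0 \<and> (\<forall>\<tau>>0. \<Phi> \<tau> > 0) \<and> filterlim \<Phi> at_top at_top"

definition lower_type :: "(real \<Rightarrow> real) \<Rightarrow> real \<Rightarrow> bool" where
  "lower_type \<Phi> p \<longleftrightarrow> (\<exists>C>0. \<forall>\<tau>\<ge>0. \<forall>s. 0 < s \<and> s < 1 \<longrightarrow> \<Phi> (s * \<tau>) \<le> C * s powr p * \<Phi> \<tau>)"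

definition upper_type :: "(real \<Rightarrow> real) \<Rightarrow> real \<Rightarrow> bool" where
  "upper_type \<Phi> p \<longleftrightarrow> (\<exists>C>0. \<forall>\<tau>\<ge>0. \<forall>s. 1 \<le> s \<longrightarrow> \<Phi> (s * \<tau>) \<le> C * s powr p * \<Phi> \<tau>)"

text \<open>Luxemburg norm on \<open>\<real>\<^sup>n\<close> (Lebesgue measure), with value \<open>\<infinity>\<close> if no admissible \<open>l\<close> exists.\<close>
definition orlicz_norm :: "(real \<Rightarrow> real) \<Rightarrow> (real^'n \<Rightarrow> real) \<Rightarrow> ennreal" where
  "orlicz_norm \<Phi> f = Inf {ennreal l | l. l > 0 \<and>
      (\<integral>\<^sup>+ x. ennreal (\<Phi> (\<bar>f x\<bar> / l)) \<partial>lebesgue) \<le> 1}"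

definition E_norm :: "(real \<Rightarrow> real) \<Rightarrow> real \<Rightarrow> real \<Rightarrow> (real^'n \<Rightarrow> real) \<Rightarrow> ennreal" where
  "E_norm \<Phi> q t f = ennpow (\<integral>\<^sup>+ x. ennpow (orlicz_norm \<Phi> (\<lambda>y. f y * indicator (ball x t) y)
        / orlicz_norm \<Phi> (indicator (ball x t) :: real^'n \<Rightarrow> real)) q \<partial>lebesgue) (1 / q)"

definition E_space :: "(real \<Rightarrow> real) \<Rightarrow> real \<Rightarrow> real \<Rightarrow> (real^'n \<Rightarrow> real) set" where
  "E_space \<Phi> q t = {f \<in> borel_measurable lebesgue. E_norm \<Phi> q t f < \<infinity>}"

definition cube :: "real \<Rightarrow> int^'n \<Rightarrow> (real^'n) set" where
  "cube t k = {x. \<forall>i. t * real_of_int (k$i) \<le> x$i \<and> x$i < t * (real_of_int (k$i) + 1)}"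

definition amalgam_norm :: "(real \<Rightarrow> real) \<Rightarrow> real \<Rightarrow> real \<Rightarrow> (real^'n \<Rightarrow> real) \<Rightarrow> ennreal" where
  "amalgam_norm \<Phi> q t f = ennpow (\<Sum>\<^sub>\<infinity>k\<in>UNIV. ennpow (orlicz_norm \<Phi> (\<lambda>y. f y * indicator (cube t k) y)) q) (1 / q)"

definition amalgam_space :: "(real \<Rightarrow> real) \<Rightarrow> real \<Rightarrow> real \<Rightarrow> (real^'n \<Rightarrow> real) set" where
  "amalgam_space \<Phi> q t = {f \<in> borel_measurable lebesgue. amalgam_norm \<Phi> q t f < \<infinity>}"

end

theory Submission
  imports Defs
begin

lemma Phi_nonneg:
  assumes "orlicz_function \<Phi>" "x \<ge> 0" shows "\<Phi> x \<ge> 0"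
  using assms unfolding orlicz_function_def by (metis order_refl)

lemma Phi_mono:
  assumes "orlicz_function \<Phi>" "0 \<le> x" "x \<le> y" shows "\<Phi> x \<le> \<Phi> y"
  using assms unfolding orlicz_function_def by blast

lemma Phi_meas:
  assumes "orlicz_function \<Phi>" and g[measurable]: "g \<in> borel_measurable M" and "\<And>x. g x \<ge> 0"
  shows "(\<lambda>x. \<Phi> (g x)) \<in> borel_measurable M"
proof -
  have "mono (\<lambda>x. \<Phi> (max 0 x))"
    by (auto simp: mono_def intro!: Phi_mono[OF assms(1)])
  then have [measurable]: "(\<lambda>x. \<Phi> (max 0 x)) \<in> borel_measurable borel" by (rule borel_measurable_mono)
  have "(\<lambda>x. \<Phi> (max 0 (g x))) \<in> borel_measurable M" by measurable
  moreover have "(\<lambda>x. \<Phi> (max 0 (g x))) = (\<lambda>x. \<Phi> (g x))" using assms(3) by (simp add: max_absorb2)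
  ultimately show ?thesis by simp
qed

lemma N_mono:
  assumes "orlicz_function \<Phi>" "\<And>y. \<bar>g y\<bar> \<le> \<bar>h y\<bar>"
  shows "orlicz_norm \<Phi> g \<le> orlicz_norm \<Phi> h"
  unfolding orlicz_norm_def
proof (rule Inf_superset_mono, safe)
  fix l assume l: "l > (0::real)" "(\<integral>\<^sup>+ x. ennreal (\<Phi> (\<bar>h x\<bar> / l)) \<partial>lebesgue) \<le> 1"
  have "(\<integral>\<^sup>+ x. ennreal (\<Phi> (\<bar>g x\<bar> / l)) \<partial>lebesgue) \<le> (\<integral>\<^sup>+ x. ennreal (\<Phi> (\<bar>h x\<bar> / l)) \<partial>lebesgue)"
    by (intro nn_integral_mono ennreal_leI Phi_mono[OF assms(1)] divide_right_mono assms(2)) (use l in auto)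
  with l show "\<exists>l'. ennreal l = ennreal l' \<and> 0 < l' \<and> (\<integral>\<^sup>+ x. ennreal (\<Phi> (\<bar>g x\<bar> / l')) \<partial>lebesgue) \<le> 1"
    by auto
qed

lemma N_upper:
  assumes "l > 0" "(\<integral>\<^sup>+ x. ennreal (\<Phi> (\<bar>g x\<bar> / l)) \<partial>lebesgue) \<le> 1"
  shows "orlicz_norm \<Phi> g \<le> ennreal l"
  unfolding orlicz_norm_def by (rule Inf_lower) (use assms in auto)

lemma N_adm:
  assumes "orlicz_function \<Phi>" "orlicz_norm \<Phi> g < ennreal L"
  shows "(\<integral>\<^sup>+ x. ennreal (\<Phi> (\<bar>g x\<bar> / L)) \<partial>lebesgue) \<le> 1"
proof -
  from assms(2) obtain l where l: "l > 0" "(\<integral>\<^sup>+ x. ennreal (\<Phi> (\<bar>g x\<bar> / l)) \<partial>lebesgue) \<le> 1" "ennreal l < ennreal L"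
    unfolding orlicz_norm_def Inf_less_iff by auto
  then have "l < L" by (simp add: ennreal_less_iff)
  have "(\<integral>\<^sup>+ x. ennreal (\<Phi> (\<bar>g x\<bar> / L)) \<partial>lebesgue) \<le> (\<integral>\<^sup>+ x. ennreal (\<Phi> (\<bar>g x\<bar> / l)) \<partial>lebesgue)"
    by (intro nn_integral_mono ennreal_leI Phi_mono[OF assms(1)] divide_left_mono) (use l \<open>l < L\<close> in auto)
  with l show ?thesis by simp
qed

lemma quasi:
  assumes \<Phi>: "orlicz_function \<Phi>" and C0: "C0 > 0" and p: "p > 0"
    and lt: "\<forall>\<tau>\<ge>0. \<forall>s. 0 < s \<and> s < 1 \<longrightarrow> \<Phi> (s * \<tau>) \<le> C0 * s powr p * \<Phi> \<tau>"
    and I: "finite I" and gm: "g \<in> borel_measurable lebesgue"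
    and Gm: "\<And>i. i \<in> I \<Longrightarrow> G i \<in> borel_measurable lebesgue"
    and cov: "\<And>y. \<exists>i\<in>I. \<bar>g y\<bar> \<le> \<bar>G i y\<bar>"
  shows "orlicz_norm \<Phi> g \<le> ennreal (2 + (C0 * card I) powr (1/p)) * (\<Sum>i\<in>I. orlicz_norm \<Phi> (G i))"
proof -
  define K where "K = 2 + (C0 * card I) powr (1/p)"
  have K2: "K \<ge> 2" unfolding K_def by simp
  have KP: "C0 * card I \<le> K powr p"
  proof -
    have "C0 * card I = ((C0 * card I) powr (1/p)) powr p"
      using p C0 by (simp add: powr_powr)
    also have "\<dots> \<le> K powr p" unfolding K_def using p by (intro powr_mono2) auto
    finally show ?thesis .
  qed
  define S where "S = (\<Sum>i\<in>I. orlicz_norm \<Phi> (G i))"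
  show ?thesis
  proof (cases "S = top")
    case True
    then show ?thesis using K2 unfolding S_def[symmetric] K_def[symmetric]
      by (simp add: ennreal_mult_top)
  next
    case False
    then obtain s where s: "S = ennreal s" "s \<ge> 0" by (cases S rule: ennreal_cases) auto
    show ?thesis unfolding S_def[symmetric] K_def[symmetric]
    proof (rule ennreal_le_epsilon)
      fix e :: real assume e: "e > 0"
      define L where "L = s + e / K"
      have L: "L > 0" unfolding L_def using e K2 s by (auto intro!: add_nonneg_pos)
      have adm: "(\<integral>\<^sup>+ x. ennreal (\<Phi> (\<bar>G i x\<bar> / L)) \<partial>lebesgue) \<le> 1" if i: "i \<in> I" for i
      proof (rule N_adm[OF \<Phi>])
        have "orlicz_norm \<Phi> (G i) \<le> S" unfolding S_def using I i by (intro member_le_sum) auto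
        also have "S < ennreal L" unfolding s L_def using e K2 s(2) by (subst ennreal_less_iff) auto
        finally show "orlicz_norm \<Phi> (G i) < ennreal L" .
      qed
      have meas: "(\<lambda>x. ennreal (\<Phi> (\<bar>G i x\<bar> / L))) \<in> borel_measurable lebesgue" if "i \<in> I" for i
        using Gm[OF that] L by (intro measurable_compose[OF _ measurable_ennreal] Phi_meas[OF \<Phi>]) auto
      have "(\<integral>\<^sup>+ x. ennreal (\<Phi> (\<bar>g x\<bar> / L)) \<partial>lebesgue) \<le> (\<integral>\<^sup>+ x. (\<Sum>i\<in>I. ennreal (\<Phi> (\<bar>G i x\<bar> / L))) \<partial>lebesgue)"
      proof (rule nn_integral_mono)
        fix x
        obtain i where i: "i \<in> I" "\<bar>g x\<bar> \<le> \<bar>G i x\<bar>" using cov by blast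
        have "ennreal (\<Phi> (\<bar>g x\<bar> / L)) \<le> ennreal (\<Phi> (\<bar>G i x\<bar> / L))"
          using i L by (intro ennreal_leI Phi_mono[OF \<Phi>] divide_right_mono) auto
        also have "\<dots> \<le> (\<Sum>i\<in>I. ennreal (\<Phi> (\<bar>G i x\<bar> / L)))"
          using I i by (intro member_le_sum) auto
        finally show "ennreal (\<Phi> (\<bar>g x\<bar> / L)) \<le> (\<Sum>i\<in>I. ennreal (\<Phi> (\<bar>G i x\<bar> / L)))" .
      qed
      also have "\<dots> = (\<Sum>i\<in>I. (\<integral>\<^sup>+ x. ennreal (\<Phi> (\<bar>G i x\<bar> / L)) \<partial>lebesgue))"
        using meas by (rule nn_integral_sum)
      also have "\<dots> \<le> (\<Sum>i\<in>I. 1)" using adm by (intro sum_mono) auto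
      also have "\<dots> = ennreal (card I)" by (simp add: ennreal_of_nat_eq_real_of_nat)
      finally have int1: "(\<integral>\<^sup>+ x. ennreal (\<Phi> (\<bar>g x\<bar> / L)) \<partial>lebesgue) \<le> ennreal (card I)" .
      define c where "c = C0 * (1/K) powr p"
      have c: "c \<ge> 0" unfolding c_def using C0 by simp
      have "c * card I \<le> 1"
      proof -
        have "c * card I = (C0 * card I) / K powr p" unfolding c_def using K2
          by (simp add: powr_divide)
        also have "\<dots> \<le> 1" using KP K2 by (simp add: divide_le_eq_1)
        finally show ?thesis .
      qed
      have "(\<integral>\<^sup>+ x. ennreal (\<Phi> (\<bar>g x\<bar> / (K * L))) \<partial>lebesgue) \<le> (\<integral>\<^sup>+ x. ennreal c * ennreal (\<Phi> (\<bar>g x\<bar> / L)) \<partial>lebesgue)"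
      proof (rule nn_integral_mono)
        fix x
        have "\<Phi> (\<bar>g x\<bar> / (K * L)) = \<Phi> ((1/K) * (\<bar>g x\<bar> / L))" by simp
        also have "\<dots> \<le> c * \<Phi> (\<bar>g x\<bar> / L)" unfolding c_def
          by (rule lt[rule_format]) (use L K2 in auto)
        finally have le1: "\<Phi> (\<bar>g x\<bar> / (K * L)) \<le> c * \<Phi> (\<bar>g x\<bar> / L)" .
        have "ennreal c * ennreal (\<Phi> (\<bar>g x\<bar> / L)) = ennreal (c * \<Phi> (\<bar>g x\<bar> / L))"
          by (rule ennreal_mult[symmetric]) (use c Phi_nonneg[OF \<Phi>, of "\<bar>g x\<bar> / L"] L in auto)
        with le1 show "ennreal (\<Phi> (\<bar>g x\<bar> / (K * L))) \<le> ennreal c * ennreal (\<Phi> (\<bar>g x\<bar> / L))"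
          by (simp add: ennreal_leI)
      qed
      also have "\<dots> = ennreal c * (\<integral>\<^sup>+ x. ennreal (\<Phi> (\<bar>g x\<bar> / L)) \<partial>lebesgue)"
        using gm L by (intro nn_integral_cmult measurable_compose[OF _ measurable_ennreal] Phi_meas[OF \<Phi>]) auto
      also have "\<dots> \<le> ennreal c * ennreal (card I)" by (intro mult_left_mono int1) auto
      also have "\<dots> = ennreal (c * card I)" using c by (simp add: ennreal_mult)
      also have "\<dots> \<le> 1" using \<open>c * card I \<le> 1\<close> by (simp add: ennreal_le_1)
      finally have "orlicz_norm \<Phi> g \<le> ennreal (K * L)" using L K2 by (intro N_upper) auto
      also have "ennreal (K * L) = ennreal K * S + ennreal e"
      proof -
        have "K * L = K * s + e" unfolding L_def using K2 by (simp add: distrib_left)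
        then have "ennreal (K * L) = ennreal (K * s) + ennreal e"
          using K2 s(2) e by (simp add: ennreal_plus)
        also have "ennreal (K * s) = ennreal K * ennreal s" using K2 s(2) by (intro ennreal_mult) auto
        finally show ?thesis unfolding s(1) .
      qed
      finally show "orlicz_norm \<Phi> g \<le> ennreal K * S + ennreal e" .
    qed
  qed
qed


lemma ennpow_top[simp]: "ennpow top a = top"
  by (simp add: ennpow_def)

lemma ennpow_ennreal: "x \<ge> 0 \<Longrightarrow> ennpow (ennreal x) a = ennreal (x powr a)"
  by (simp add: ennpow_def)

lemma ennpow_mono:
  assumes "x \<le> y" "a \<ge> 0" shows "ennpow x a \<le> ennpow y a"
proof (cases "y = top")
  case True then show ?thesis by simp
next
  case False
  then obtain y' where y: "y = ennreal y'" "y' \<ge> 0" by (cases y rule: ennreal_cases) auto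
  with assms(1) obtain x' where x: "x = ennreal x'" "x' \<ge> 0" "x' \<le> y'"
    by (cases x rule: ennreal_cases) (auto simp: ennreal_le_iff top_unique)
  show ?thesis unfolding x y using x y assms by (simp add: ennpow_ennreal powr_mono2 ennreal_leI)
qed

lemma ennpow_less_top: "ennpow x a < top \<longleftrightarrow> x < top"
  by (cases x rule: ennreal_cases) (auto simp: ennpow_def)

lemma ennpow_cmult:
  assumes "c \<ge> 0" "a > 0" shows "ennpow (ennreal c * x) a = ennreal (c powr a) * ennpow x a"
proof (cases "x = top")
  case True
  show ?thesis
  proof (cases "c = 0")
    case True with \<open>x = top\<close> show ?thesis by (simp add: ennpow_def)
  next
    case False
    then have "c > 0" using assms by auto
    then show ?thesis using \<open>x = top\<close> by (simp add: ennreal_mult_top)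
  qed
next
  case False
  then obtain x' where x: "x = ennreal x'" "x' \<ge> 0" by (cases x rule: ennreal_cases) auto
  have e: "ennreal c * x = ennreal (c * x')" unfolding x using assms x by (simp add: ennreal_mult)
  have "ennpow (ennreal (c*x')) a = ennreal ((c*x') powr a)" by (rule ennpow_ennreal) (use assms x in auto)
  also have "\<dots> = ennreal (c powr a) * ennreal (x' powr a)" using assms x by (simp add: powr_mult ennreal_mult)
  finally show ?thesis unfolding e unfolding x ennpow_ennreal[OF x(2)] .
qed

lemma sum_le_card_max:
  fixes f :: "'i \<Rightarrow> ennreal"
  assumes "finite I" "I \<noteq> {}"
  shows "\<exists>i0\<in>I. (\<Sum>i\<in>I. f i) \<le> of_nat (card I) * f i0"
proof -
  have "Max (f ` I) \<in> f ` I" using assms by (intro Max_in) auto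
  then obtain i0 where i0: "i0 \<in> I" "f i0 = Max (f ` I)" by auto
  have "(\<Sum>i\<in>I. f i) \<le> (\<Sum>i\<in>I. f i0)" using assms i0 by (intro sum_mono) auto
  also have "\<dots> = of_nat (card I) * f i0" by simp
  finally show ?thesis using i0 by blast
qed

lemma quasi_pow:
  assumes \<Phi>: "orlicz_function \<Phi>" and C0: "C0 > 0" and p: "p > 0" and q: "q > 0"
    and lt: "\<forall>\<tau>\<ge>0. \<forall>s. 0 < s \<and> s < 1 \<longrightarrow> \<Phi> (s * \<tau>) \<le> C0 * s powr p * \<Phi> \<tau>"
    and I: "finite I" and gm: "g \<in> borel_measurable lebesgue"
    and Gm: "\<And>i. i \<in> I \<Longrightarrow> G i \<in> borel_measurable lebesgue"
    and cov: "\<And>y. \<exists>i\<in>I. \<bar>g y\<bar> \<le> \<bar>G i y\<bar>"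
  shows "ennpow (orlicz_norm \<Phi> g) q \<le>
    ennreal (((2 + (C0 * card I) powr (1/p)) * card I) powr q) * (\<Sum>i\<in>I. ennpow (orlicz_norm \<Phi> (G i)) q)"
proof -
  define K where "K = 2 + (C0 * card I) powr (1/p)"
  have K: "K \<ge> 0" unfolding K_def by simp
  have "I \<noteq> {}" using cov by blast
  then obtain i0 where i0: "i0 \<in> I" "(\<Sum>i\<in>I. orlicz_norm \<Phi> (G i)) \<le> of_nat (card I) * orlicz_norm \<Phi> (G i0)"
    using sum_le_card_max[OF I] by blast
  have "orlicz_norm \<Phi> g \<le> ennreal K * (\<Sum>i\<in>I. orlicz_norm \<Phi> (G i))"
    unfolding K_def by (rule quasi[OF \<Phi> C0 p lt I gm Gm cov]) auto
  also have "\<dots> \<le> ennreal K * (of_nat (card I) * orlicz_norm \<Phi> (G i0))"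
    by (intro mult_left_mono i0) auto
  also have "\<dots> = ennreal (K * card I) * orlicz_norm \<Phi> (G i0)"
    using K by (simp add: ennreal_mult ennreal_of_nat_eq_real_of_nat mult.assoc)
  finally have "ennpow (orlicz_norm \<Phi> g) q \<le> ennpow (ennreal (K * card I) * orlicz_norm \<Phi> (G i0)) q"
    using q by (intro ennpow_mono) auto
  also have "\<dots> = ennreal ((K * card I) powr q) * ennpow (orlicz_norm \<Phi> (G i0)) q"
    using K q by (intro ennpow_cmult) auto
  also have "\<dots> \<le> ennreal ((K * card I) powr q) * (\<Sum>i\<in>I. ennpow (orlicz_norm \<Phi> (G i)) q)"
    using I i0 by (intro mult_left_mono member_le_sum) auto
  finally show ?thesis unfolding K_def .
qed


definition cidx :: "real \<Rightarrow> real^'n \<Rightarrow> int^'n" where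
  "cidx s x = (\<chi> i. \<lfloor>x$i / s\<rfloor>)"

lemma mem_cube_iff:
  assumes "s > 0" shows "x \<in> cube s k \<longleftrightarrow> cidx s x = k"
proof -
  have "x \<in> cube s k \<longleftrightarrow> (\<forall>i. real_of_int (k$i) \<le> x$i / s \<and> x$i / s < real_of_int (k$i) + 1)"
    unfolding cube_def using assms by (simp add: field_simps)
  also have "\<dots> \<longleftrightarrow> (\<forall>i. \<lfloor>x$i / s\<rfloor> = k$i)" by (simp add: floor_eq_iff)
  also have "\<dots> \<longleftrightarrow> cidx s x = k" unfolding cidx_def by (simp add: vec_eq_iff)
  finally show ?thesis .
qed

lemma cube_cidx: "s > 0 \<Longrightarrow> x \<in> cube s (cidx s x)"
  by (simp add: mem_cube_iff)

lemma cube_borel: "cube s k \<in> sets (borel :: (real^'n) measure)"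
proof -
  have "cube s k = (\<Inter>i. {x::real^'n. s * real_of_int (k$i) \<le> x$i}) \<inter> (\<Inter>i. {x. x$i < s * (real_of_int (k$i) + 1)})"
    unfolding cube_def by auto
  also have "\<dots> \<in> sets borel"
    by (intro sets.Int sets.countable_INT' borel_closed borel_open closed_Collect_le open_Collect_less continuous_intros) auto
  finally show ?thesis .
qed

lemma cube_lebesgue: "cube s k \<in> sets (lebesgue :: (real^'n) measure)"
  by (rule sets_completionI_sets) (simp add: cube_borel)

declare cube_lebesgue[measurable]

lemma emeasure_lebesgue_borel:
  assumes "S \<in> sets borel" shows "emeasure lebesgue S = emeasure lborel S"
proof -
  have S: "S \<in> sets lborel" using assms by simp
  have "S \<in> sets lebesgue" using S by (rule sets_completionI_sets)
  then show ?thesis using S by (simp add: emeasure_completion main_part)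
qed

lemma emeasure_cube:
  assumes s: "s > 0"
  shows "emeasure (lebesgue :: (real^'n) measure) (cube s k) = ennreal (s ^ CARD('n))"
proof -
  define a :: "real^'n" where "a = (\<chi> i. s * real_of_int (k$i))"
  define b :: "real^'n" where "b = (\<chi> i. s * (real_of_int (k$i) + 1))"
  have ab: "\<forall>i. a$i \<le> b$i" unfolding a_def b_def using s by auto
  have sub1: "box a b \<subseteq> cube s k" unfolding cube_def a_def b_def by (auto simp: mem_box_cart less_imp_le)
  have sub2: "cube s k \<subseteq> cbox a b" unfolding cube_def a_def b_def by (auto simp: mem_box_cart less_imp_le)
  have "a \<in> cbox a b" using ab by (simp add: mem_box_cart)
  then have ne: "cbox a b \<noteq> {}" by blast
  have "emeasure lborel (cbox a b) = ennreal (measure lborel (cbox a b))"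
    using emeasure_lborel_cbox_finite[of a b] by (simp add: emeasure_eq_ennreal_measure less_top)
  also have "measure lborel (cbox a b) = s ^ CARD('n)"
    using ne by (simp add: content_cbox_cart a_def b_def algebra_simps)
  finally have cb: "emeasure lborel (cbox a b) = ennreal (s ^ CARD('n))" .
  have bx: "emeasure lborel (box a b) = emeasure lborel (cbox a b)"
    by (simp only: emeasure_lborel_box_eq emeasure_lborel_cbox_eq)
  have "emeasure lborel (cube s k) \<le> emeasure lborel (cbox a b)"
    by (intro emeasure_mono sub2) auto
  moreover have "emeasure lborel (box a b) \<le> emeasure lborel (cube s k)"
    using cube_borel by (intro emeasure_mono sub1) auto
  ultimately have "emeasure lborel (cube s k) = ennreal (s ^ CARD('n))"
    using cb bx by (metis antisym)
  then show ?thesis by (metis emeasure_lebesgue_borel[OF cube_borel[of s k]])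
qed

lemma cidx_meas:
  assumes s: "s > 0"
  shows "cidx s \<in> (lebesgue :: (real^'n) measure) \<rightarrow>\<^sub>M count_space UNIV"
proof (subst measurable_count_space_eq2_countable, safe)
  fix k :: "int^'n"
  have "cidx s -` {k} \<inter> space lebesgue = cube s k" using mem_cube_iff[OF s] by auto
  then show "cidx s -` {k} \<inter> space lebesgue \<in> sets lebesgue" using cube_lebesgue by simp
qed auto


lemma infinite_vec_int: "infinite (UNIV :: (int^'n) set)"
proof
  assume "finite (UNIV :: (int^'n) set)"
  then have "finite (range (vec :: int \<Rightarrow> int^'n))" by (rule finite_subset[rotated]) auto
  moreover have "inj (vec :: int \<Rightarrow> int^'n)" by (auto simp: inj_on_def vec_eq_iff)
  ultimately have "finite (UNIV :: int set)" using finite_imageD by blast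
  then show False by simp
qed

lemma infsum_count:
  fixes f :: "int^'n \<Rightarrow> ennreal"
  shows "infsum f UNIV = (\<integral>\<^sup>+k. f k \<partial>count_space UNIV)"
proof -
  define e where "e = from_nat_into (UNIV :: (int^'n) set)"
  have e: "bij_betw e UNIV UNIV" unfolding e_def
    by (intro bij_betw_from_nat_into infinite_vec_int) auto
  have "infsum f UNIV = infsum (\<lambda>n. f (e n)) UNIV" using infsum_reindex_bij_betw[OF e, of f] by simp
  also have "\<dots> = (\<Sum>n. f (e n))"
  proof -
    have "((\<lambda>n. f (e n)) has_sum infsum (\<lambda>n. f (e n)) UNIV) UNIV" by (rule has_sum_infsum, rule nonneg_summable_on_complete) simp
    then have "(\<lambda>n. f (e n)) sums infsum (\<lambda>n. f (e n)) UNIV" by (rule has_sum_imp_sums)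
    then show ?thesis by (simp add: sums_unique)
  qed
  also have "\<dots> = (\<integral>\<^sup>+n. f (e n) \<partial>count_space UNIV)" by (simp add: nn_integral_count_space_nat)
  also have "\<dots> = (\<integral>\<^sup>+k. f k \<partial>count_space UNIV)" by (rule nn_integral_bij_count_space[OF e])
  finally show ?thesis .
qed

lemma integral_cidx:
  fixes F :: "int^'n \<Rightarrow> ennreal"
  assumes s: "s > 0"
  shows "(\<integral>\<^sup>+x. F (cidx s x) \<partial>(lebesgue :: (real^'n) measure)) = ennreal (s ^ CARD('n)) * infsum F UNIV"
proof -
  have eq: "F (cidx s x) = (\<integral>\<^sup>+k. F k * indicator (cube s k) x \<partial>count_space UNIV)" for x :: "real^'n"
  proof -
    have "(\<lambda>k. F k * indicator (cube s k) x) = (\<lambda>k. F k * indicator {cidx s x} k)"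
      using mem_cube_iff[OF s] by (auto simp: fun_eq_iff split: split_indicator)
    then show ?thesis by simp
  qed
  have "(\<integral>\<^sup>+x. F (cidx s x) \<partial>(lebesgue :: (real^'n) measure)) =
        (\<integral>\<^sup>+x. (\<integral>\<^sup>+k. F k * indicator (cube s k) x \<partial>count_space UNIV) \<partial>lebesgue)"
    by (simp only: eq)
  also have "\<dots> = (\<integral>\<^sup>+k. (\<integral>\<^sup>+x. F k * indicator (cube s k) x \<partial>lebesgue) \<partial>count_space UNIV)"
    by (rule nn_integral_count_space_nn_integral) (simp_all add: cube_lebesgue)
  also have "\<dots> = (\<integral>\<^sup>+k. F k * ennreal (s ^ CARD('n)) \<partial>count_space UNIV)"
    by (intro nn_integral_cong) (simp add: nn_integral_cmult_indicator cube_lebesgue emeasure_cube[OF s])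
  also have "\<dots> = (\<integral>\<^sup>+k. F k \<partial>count_space UNIV) * ennreal (s ^ CARD('n))"
    by (rule nn_integral_multc) simp
  finally show ?thesis by (simp add: infsum_count mult.commute)
qed


lemma finite_vec_box:
  assumes "finite A" shows "finite {v :: int^'n. \<forall>i. v$i \<in> A}"
proof -
  have "{v :: int^'n. \<forall>i. v$i \<in> A} \<subseteq> (\<lambda>g. \<chi> i. g i) ` (PiE UNIV (\<lambda>_. A))"
  proof
    fix v :: "int^'n" assume "v \<in> {v. \<forall>i. v$i \<in> A}"
    then have "(\<lambda>i. v$i) \<in> PiE UNIV (\<lambda>_. A)" by auto
    then show "v \<in> (\<lambda>g. \<chi> i. g i) ` (PiE UNIV (\<lambda>_. A))" by (intro image_eqI[of _ _ "\<lambda>i. v$i"]) auto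
  qed
  moreover have "finite (PiE (UNIV::'n set) (\<lambda>_. A))" using assms by (intro finite_PiE) auto
  ultimately show ?thesis by (meson finite_imageI finite_subset)
qed

lemma floor_close:
  fixes a b :: real assumes "\<bar>a - b\<bar> < 1" shows "\<bar>\<lfloor>a\<rfloor> - \<lfloor>b\<rfloor>\<bar> \<le> 1"
proof -
  have f: "real_of_int \<lfloor>a\<rfloor> \<le> a" "a < real_of_int \<lfloor>a\<rfloor> + 1"
          "real_of_int \<lfloor>b\<rfloor> \<le> b" "b < real_of_int \<lfloor>b\<rfloor> + 1"
    by (simp_all add: of_int_floor_le real_of_int_floor_add_one_gt)
  have "real_of_int \<lfloor>a\<rfloor> < real_of_int \<lfloor>b\<rfloor> + 2" "real_of_int \<lfloor>b\<rfloor> < real_of_int \<lfloor>a\<rfloor> + 2"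
    using f assms unfolding abs_less_iff by linarith+
  then have "\<lfloor>a\<rfloor> < \<lfloor>b\<rfloor> + 2" "\<lfloor>b\<rfloor> < \<lfloor>a\<rfloor> + 2" by linarith+
  then show ?thesis by linarith
qed

lemma ball_cidx:
  fixes x y :: "real^'n"
  assumes t: "t > 0" and y: "y \<in> ball x t"
  shows "\<forall>i. (cidx t y - cidx t x)$i \<in> {-1..1}"
proof
  fix i
  have "\<bar>y$i - x$i\<bar> \<le> norm (y - x)" using component_le_norm_cart[of "y - x" i] by simp
  also have "\<dots> < t" using y by (simp add: dist_norm norm_minus_commute)
  finally have lt1: "\<bar>y$i - x$i\<bar> / t < 1" using t by simp
  have "\<bar>y$i / t - x$i / t\<bar> = \<bar>y$i - x$i\<bar> / t" using t by (metis abs_divide abs_of_pos diff_divide_distrib)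
  with lt1 have "\<bar>y$i / t - x$i / t\<bar> < 1" by simp
  then have "\<bar>\<lfloor>y$i / t\<rfloor> - \<lfloor>x$i / t\<rfloor>\<bar> \<le> 1" by (rule floor_close)
  then show "(cidx t y - cidx t x)$i \<in> {-1..1}" unfolding cidx_def by auto
qed

lemma cube_cidx_sub:
  fixes y :: "real^'n"
  assumes t: "t > 0" and m: "m > (0::nat)" and y: "y \<in> cube t k"
  shows "\<forall>i. (cidx (t / m) y - (\<chi> i. int m * k$i))$i \<in> {0..int m - 1}"
proof
  fix i
  have y1: "t * k$i \<le> y$i" and y2: "y$i < t * (k$i + 1)" using y unfolding cube_def by auto
  have eq: "y$i / (t / m) = m * (y$i / t)" using t m by simp
  have b: "k$i \<le> y$i / t" "y$i / t < k$i + 1" using y1 y2 t by (simp_all add: field_simps)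
  have a1: "real m * k$i \<le> y$i / (t / m)" unfolding eq using b(1) by (rule mult_left_mono) auto
  have "y$i / (t / m) < real m * (k$i + 1)" unfolding eq using b(2) m by (intro mult_strict_left_mono) auto
  then have a2: "y$i / (t / m) < real m * k$i + real m" by (simp add: distrib_left)
  note a = a1 a2
  have "int m * k$i \<le> \<lfloor>y$i / (t / m)\<rfloor>" using a(1) by (simp add: le_floor_iff)
  moreover have "\<lfloor>y$i / (t / m)\<rfloor> < int m * k$i + int m" using a(2) by (simp add: floor_less_iff)
  ultimately show "(cidx (t / m) y - (\<chi> i. int m * k$i))$i \<in> {0..int m - 1}" unfolding cidx_def by auto
qed

lemma small_cube_in_ball:
  fixes x :: "real^'n"
  assumes t: "t > 0" and x: "x \<in> cube (t / (CARD('n) + 1)) k"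
  shows "cube (t / (CARD('n) + 1)) k \<subseteq> ball x t"
proof
  fix y assume y: "y \<in> cube (t / (CARD('n) + 1)) k"
  define s where "s = t / (CARD('n) + 1)"
  have s: "s > 0" unfolding s_def using t by simp
  have "\<bar>(x - y)$i\<bar> < s" for i
  proof -
    have xs: "x \<in> cube s k" and ys: "y \<in> cube s k" using x y unfolding s_def by auto
    have "s * real_of_int (k$i) \<le> x$i" "x$i < s * (real_of_int (k$i) + 1)"
         "s * real_of_int (k$i) \<le> y$i" "y$i < s * (real_of_int (k$i) + 1)"
      using xs ys unfolding cube_def by auto
    moreover have "s * (real_of_int (k$i) + 1) = s * real_of_int (k$i) + s" by (simp add: distrib_left)
    ultimately show ?thesis by (simp add: abs_less_iff)
  qed
  have "dist x y = norm (x - y)" by (simp add: dist_norm)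
  also have "\<dots> \<le> (\<Sum>i\<in>UNIV. \<bar>(x - y)$i\<bar>)" by (rule norm_le_l1_cart)
  also have "\<dots> < (\<Sum>i\<in>(UNIV::'n set). s)"
    using sum_strict_mono[of "UNIV::'n set" "\<lambda>i. \<bar>(x - y)$i\<bar>" "\<lambda>i. s"] \<open>\<And>i. \<bar>(x - y)$i\<bar> < s\<close> by auto
  also have "\<dots> = CARD('n) * s" by simp
  also have "\<dots> < t" unfolding s_def using t by (simp add: field_simps)
  finally show "y \<in> ball x t" by simp
qed


lemma ball_lebesgue[measurable]: "ball x r \<in> sets (lebesgue :: (real^'n) measure)"
  by (rule sets_completionI_sets) simp

lemma emeasure_ball_pos_fin:
  fixes x :: "real^'n"
  assumes t: "t > 0"
  shows "0 < emeasure lebesgue (ball x t)" "emeasure lebesgue (ball x t) < top"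
proof -
  define s where "s = t / (CARD('n) + 1)"
  have s: "s > 0" unfolding s_def using t by simp
  have "x \<in> cube s (cidx s x)" by (rule cube_cidx[OF s])
  then have sub: "cube s (cidx s x) \<subseteq> ball x t" unfolding s_def by (intro small_cube_in_ball t)
  have "0 < ennreal (s ^ CARD('n))" using s by simp
  also have "\<dots> = emeasure lebesgue (cube s (cidx s x))" by (rule emeasure_cube[OF s, symmetric])
  also have "\<dots> \<le> emeasure lebesgue (ball x t)" by (intro emeasure_mono sub) simp
  finally show "0 < emeasure lebesgue (ball x t)" .
  show "emeasure lebesgue (ball x t) < top"
    using emeasure_lborel_ball_finite[of x t] emeasure_lebesgue_borel[of "ball x t"] by simp
qed

lemma N_indicator_ball:
  fixes x :: "real^'n"
  assumes \<Phi>: "orlicz_function \<Phi>"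
  shows "orlicz_norm \<Phi> (indicator (ball x t) :: real^'n \<Rightarrow> real) =
    Inf {ennreal l | l. l > 0 \<and> ennreal (\<Phi> (1 / l)) * emeasure lebesgue (ball x t) \<le> 1}"
proof -
  have "(\<integral>\<^sup>+ y. ennreal (\<Phi> (\<bar>indicator (ball x t) y :: real\<bar> / l)) \<partial>lebesgue) =
        ennreal (\<Phi> (1 / l)) * emeasure lebesgue (ball x t)" for l
  proof -
    have "(\<lambda>y. ennreal (\<Phi> (\<bar>indicator (ball x t) y :: real\<bar> / l))) = (\<lambda>y. ennreal (\<Phi> (1 / l)) * indicator (ball x t) y)"
      using \<Phi> by (auto simp: fun_eq_iff orlicz_function_def split: split_indicator)
    then show ?thesis by (simp add: nn_integral_cmult_indicator)
  qed
  then show ?thesis unfolding orlicz_norm_def by simp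
qed

lemma N_indicator_ball_const:
  fixes x :: "real^'n"
  assumes \<Phi>: "orlicz_function \<Phi>" and t: "t > 0"
  shows "orlicz_norm \<Phi> (indicator (ball x t) :: real^'n \<Rightarrow> real) = orlicz_norm \<Phi> (indicator (ball 0 t) :: real^'n \<Rightarrow> real)"
proof -
  have "emeasure lebesgue (ball x t) = emeasure lebesgue (ball (0::real^'n) t)"
    using emeasure_lebesgue_ball_conv_unit_ball[of t x] emeasure_lebesgue_ball_conv_unit_ball[of t "0::real^'n"] t by simp
  then show ?thesis unfolding N_indicator_ball[OF \<Phi>] by simp
qed

lemma N_indicator_ball_pos_fin:
  fixes x :: "real^'n"
  assumes \<Phi>: "orlicz_function \<Phi>" and t: "t > 0" and C0: "C0 > 0" and p: "p > 0"
    and lt: "\<forall>\<tau>\<ge>0. \<forall>s. 0 < s \<and> s < 1 \<longrightarrow> \<Phi> (s * \<tau>) \<le> C0 * s powr p * \<Phi> \<tau>"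
  shows "0 < orlicz_norm \<Phi> (indicator (ball x t) :: real^'n \<Rightarrow> real)"
        "orlicz_norm \<Phi> (indicator (ball x t) :: real^'n \<Rightarrow> real) < top"
proof -
  define V where "V = emeasure lebesgue (ball x t)"
  obtain v where v: "V = ennreal v" "v > 0"
    using emeasure_ball_pos_fin[OF t, of x] unfolding V_def[symmetric]
    by (cases V rule: ennreal_cases) auto
  have N: "orlicz_norm \<Phi> (indicator (ball x t) :: real^'n \<Rightarrow> real) =
      Inf {ennreal l | l. l > 0 \<and> ennreal (\<Phi> (1 / l)) * V \<le> 1}"
    unfolding V_def by (rule N_indicator_ball[OF \<Phi>])
  have "eventually (\<lambda>y. \<Phi> y \<ge> 2 / v) at_top"
    using \<Phi> unfolding orlicz_function_def filterlim_at_top by blast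
  then obtain M where M: "\<And>y. y \<ge> M \<Longrightarrow> \<Phi> y \<ge> 2 / v" unfolding eventually_at_top_linorder by blast
  define M' where "M' = max M 1"
  have M': "M' > 0" "\<And>y. y \<ge> M' \<Longrightarrow> \<Phi> y \<ge> 2 / v" unfolding M'_def using M by auto
  have "ennreal (1 / M') \<le> orlicz_norm \<Phi> (indicator (ball x t) :: real^'n \<Rightarrow> real)"
    unfolding N
  proof (rule Inf_greatest, safe)
    fix l :: real assume l: "l > 0" "ennreal (\<Phi> (1 / l)) * V \<le> 1"
    show "ennreal (1 / M') \<le> ennreal l"
    proof (rule ccontr)
      assume "\<not> ennreal (1 / M') \<le> ennreal l"
      then have "l < 1 / M'" using l by (simp add: ennreal_le_iff2 not_le)
      then have "1 / l > M'" using l M' by (simp add: field_simps)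
      then have "\<Phi> (1 / l) \<ge> 2 / v" using M' by auto
      then have "\<Phi> (1 / l) * v \<ge> 2" using v by (simp add: field_simps)
      moreover have "ennreal (\<Phi> (1 / l)) * V = ennreal (\<Phi> (1 / l) * v)"
        unfolding v using v Phi_nonneg[OF \<Phi>, of "1/l"] l by (simp add: ennreal_mult)
      ultimately have "ennreal 2 \<le> ennreal (\<Phi> (1 / l)) * V" by (simp add: ennreal_leI)
      from order_trans[OF this l(2)] show False by simp
    qed
  qed
  moreover have "0 < ennreal (1 / M')" using M' by simp
  ultimately show "0 < orlicz_norm \<Phi> (indicator (ball x t) :: real^'n \<Rightarrow> real)" by order
  define A where "A = C0 * \<Phi> 1 * v"
  have A: "A \<ge> 0" unfolding A_def using C0 v Phi_nonneg[OF \<Phi>, of 1] by simp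
  define s where "s = min (1/2) ((1 / (A + 1)) powr (1/p))"
  have s: "s > 0" "s < 1" unfolding s_def using A by auto
  have "s powr p \<le> ((1 / (A + 1)) powr (1/p)) powr p"
    unfolding s_def using s p by (intro powr_mono2) auto
  also have "\<dots> = 1 / (A + 1)" using A p by (simp add: powr_powr)
  finally have sp: "s powr p \<le> 1 / (A + 1)" .
  have "\<Phi> (s * 1) \<le> C0 * s powr p * \<Phi> 1" using s by (intro lt[rule_format]) auto
  then have "\<Phi> (1 / (1/s)) * v \<le> C0 * s powr p * \<Phi> 1 * v" using v by (simp add: mult_right_mono)
  also have "\<dots> = A * s powr p" unfolding A_def by simp
  also have "\<dots> \<le> A * (1 / (A + 1))" using A sp by (intro mult_left_mono) auto
  also have "\<dots> \<le> 1" using A by (simp add: field_simps)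
  finally have le1: "\<Phi> (1 / (1/s)) * v \<le> 1" .
  have "orlicz_norm \<Phi> (indicator (ball x t) :: real^'n \<Rightarrow> real) \<le> ennreal (1/s)"
    unfolding N
  proof (rule Inf_lower, safe, intro exI conjI)
    show "ennreal (1/s) = ennreal (1/s)" "1/s > 0" using s by auto
    have "ennreal (\<Phi> (1 / (1/s))) * V = ennreal (\<Phi> (1 / (1/s)) * v)"
      unfolding v using v Phi_nonneg[OF \<Phi>, of "1/(1/s)"] s by (simp add: ennreal_mult)
    then show "ennreal (\<Phi> (1 / (1/s))) * V \<le> 1" using le1 by (simp add: ennreal_le_1)
  qed
  then show "orlicz_norm \<Phi> (indicator (ball x t) :: real^'n \<Rightarrow> real) < top"
    using le_less_trans by fastforce
qed


lemma count_shift: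
  fixes a :: "int^'n \<Rightarrow> ennreal"
  shows "(\<integral>\<^sup>+k. a (k + j) \<partial>count_space UNIV) = (\<integral>\<^sup>+k. a k \<partial>count_space UNIV)"
proof -
  have "bij_betw (\<lambda>k. k + j) UNIV UNIV" by (rule bij_betwI[where g="\<lambda>k. k - j"]) auto
  then show ?thesis by (rule nn_integral_bij_count_space)
qed

lemma count_inj_le:
  fixes a :: "int^'n \<Rightarrow> ennreal"
  assumes "inj \<phi>"
  shows "(\<integral>\<^sup>+k. a (\<phi> k) \<partial>count_space UNIV) \<le> (\<integral>\<^sup>+k. a k \<partial>count_space UNIV)"
proof -
  have "bij_betw \<phi> UNIV (range \<phi>)" using assms by (simp add: bij_betw_def)
  then have "(\<integral>\<^sup>+k. a (\<phi> k) \<partial>count_space UNIV) = (\<integral>\<^sup>+k. a k \<partial>count_space (range \<phi>))"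
    by (rule nn_integral_bij_count_space)
  also have "\<dots> = (\<integral>\<^sup>+k. a k * indicator (range \<phi>) k \<partial>count_space UNIV)"
    by (rule nn_integral_count_space_indicator) (simp add: NO_MATCH_def)
  also have "\<dots> \<le> (\<integral>\<^sup>+k. a k \<partial>count_space UNIV)"
    by (intro nn_integral_mono) (auto split: split_indicator)
  finally show ?thesis .
qed

lemma meas_F_cidx:
  fixes F :: "int^'n \<Rightarrow> ennreal"
  assumes s: "s > 0"
  shows "(\<lambda>x. F (cidx s x)) \<in> borel_measurable (lebesgue :: (real^'n) measure)"
  by (rule measurable_compose[OF cidx_meas[OF s]]) simp

lemma fmeas:
  fixes f :: "real^'n \<Rightarrow> real"
  assumes "f \<in> borel_measurable lebesgue" "A \<in> sets lebesgue"
  shows "(\<lambda>y. f y * indicator A y) \<in> borel_measurable lebesgue"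
  by (intro borel_measurable_times assms(1) borel_measurable_indicator assms(2))

lemma upper_pt:
  fixes f :: "real^'n \<Rightarrow> real" and x :: "real^'n"
  assumes \<Phi>: "orlicz_function \<Phi>" and C0: "C0 > 0" and p: "p > 0" and q: "q > 0"
    and lt: "\<forall>\<tau>\<ge>0. \<forall>s. 0 < s \<and> s < 1 \<longrightarrow> \<Phi> (s * \<tau>) \<le> C0 * s powr p * \<Phi> \<tau>"
    and t: "t > 0" and fm: "f \<in> borel_measurable lebesgue"
  defines "J \<equiv> {j :: int^'n. \<forall>i. j$i \<in> {-1..1}}"
  shows "ennpow (orlicz_norm \<Phi> (\<lambda>y. f y * indicator (ball x t) y)) q \<le>
    ennreal (((2 + (C0 * card J) powr (1/p)) * card J) powr q) *
    (\<Sum>j\<in>J. ennpow (orlicz_norm \<Phi> (\<lambda>y. f y * indicator (cube t (cidx t x + j)) y)) q)"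
proof (rule quasi_pow[OF \<Phi> C0 p q lt])
  show "finite J" unfolding J_def by (rule finite_vec_box) simp
  show "(\<lambda>y. f y * indicator (ball x t) y) \<in> borel_measurable lebesgue" by (rule fmeas[OF fm]) simp
  show "(\<lambda>y. f y * indicator (cube t (cidx t x + j)) y) \<in> borel_measurable lebesgue" for j
    by (rule fmeas[OF fm]) simp
  fix y
  show "\<exists>j\<in>J. \<bar>f y * indicator (ball x t) y\<bar> \<le> \<bar>f y * indicator (cube t (cidx t x + j)) y\<bar>"
  proof (cases "y \<in> ball x t")
    case True
    define j where "j = cidx t y - cidx t x"
    have "j \<in> J" unfolding J_def j_def using ball_cidx[OF t True] by auto
    moreover have "y \<in> cube t (cidx t x + j)" unfolding j_def using cube_cidx[OF t] by simp
    ultimately show ?thesis using True by (intro bexI[of _ j]) auto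
  next
    case False
    have "0 \<in> J" unfolding J_def by simp
    with False show ?thesis by (intro bexI[of _ 0]) auto
  qed
qed


lemma upper_int:
  fixes a :: "int^'n \<Rightarrow> ennreal"
  assumes t: "t > 0" and J: "finite J"
  shows "(\<integral>\<^sup>+x. K * (\<Sum>j\<in>J. a (cidx t x + j)) \<partial>(lebesgue :: (real^'n) measure)) =
    K * of_nat (card J) * (ennreal (t ^ CARD('n)) * infsum a UNIV)"
proof -
  have "(\<integral>\<^sup>+x. K * (\<Sum>j\<in>J. a (cidx t x + j)) \<partial>(lebesgue :: (real^'n) measure)) =
    ennreal (t ^ CARD('n)) * infsum (\<lambda>k. K * (\<Sum>j\<in>J. a (k + j))) UNIV"
    by (rule integral_cidx[OF t, of "\<lambda>k. K * (\<Sum>j\<in>J. a (k + j))"])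
  also have "infsum (\<lambda>k. K * (\<Sum>j\<in>J. a (k + j))) UNIV = (\<integral>\<^sup>+k. K * (\<Sum>j\<in>J. a (k + j)) \<partial>count_space UNIV)"
    by (rule infsum_count)
  also have "\<dots> = K * (\<integral>\<^sup>+k. (\<Sum>j\<in>J. a (k + j)) \<partial>count_space UNIV)"
    by (rule nn_integral_cmult) simp
  also have "(\<integral>\<^sup>+k. (\<Sum>j\<in>J. a (k + j)) \<partial>count_space UNIV) = (\<Sum>j\<in>J. (\<integral>\<^sup>+k. a (k + j) \<partial>count_space UNIV))"
    by (rule nn_integral_sum) simp
  also have "\<dots> = (\<Sum>j\<in>J. (\<integral>\<^sup>+k. a k \<partial>count_space UNIV))" by (simp add: count_shift)
  also have "\<dots> = of_nat (card J) * infsum a UNIV" by (simp add: infsum_count)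
  finally show ?thesis by (simp add: ac_simps)
qed

lemma lower_pt:
  fixes f :: "real^'n \<Rightarrow> real"
  assumes \<Phi>: "orlicz_function \<Phi>" and C0: "C0 > 0" and p: "p > 0" and q: "q > 0"
    and lt: "\<forall>\<tau>\<ge>0. \<forall>s. 0 < s \<and> s < 1 \<longrightarrow> \<Phi> (s * \<tau>) \<le> C0 * s powr p * \<Phi> \<tau>"
    and t: "t > 0" and fm: "f \<in> borel_measurable lebesgue"
  defines "m \<equiv> CARD('n) + 1"
  defines "R \<equiv> {r :: int^'n. \<forall>i. r$i \<in> {0..int m - 1}}"
  shows "ennpow (orlicz_norm \<Phi> (\<lambda>y. f y * indicator (cube t k) y)) q \<le>
    ennreal (((2 + (C0 * card R) powr (1/p)) * card R) powr q) *
    (\<Sum>r\<in>R. ennpow (orlicz_norm \<Phi> (\<lambda>y. f y * indicator (cube (t / m) ((\<chi> i. int m * k$i) + r)) y)) q)"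
proof (rule quasi_pow[OF \<Phi> C0 p q lt])
  have m: "m > 0" unfolding m_def by simp
  have s: "t / m > 0" using t m by simp
  show "finite R" unfolding R_def by (rule finite_vec_box) simp
  show "(\<lambda>y. f y * indicator (cube t k) y) \<in> borel_measurable lebesgue" by (rule fmeas[OF fm]) simp
  show "(\<lambda>y. f y * indicator (cube (t / m) ((\<chi> i. int m * k$i) + r)) y) \<in> borel_measurable lebesgue" for r
    by (rule fmeas[OF fm]) simp
  fix y
  show "\<exists>r\<in>R. \<bar>f y * indicator (cube t k) y\<bar> \<le> \<bar>f y * indicator (cube (t / m) ((\<chi> i. int m * k$i) + r)) y\<bar>"
  proof (cases "y \<in> cube t k")
    case True
    define r where "r = cidx (t / m) y - (\<chi> i. int m * k$i)"
    have "r \<in> R" unfolding R_def r_def using cube_cidx_sub[OF t m True] by auto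
    moreover have "y \<in> cube (t / m) ((\<chi> i. int m * k$i) + r)" unfolding r_def using cube_cidx[OF s] by simp
    ultimately show ?thesis using True by (intro bexI[of _ r]) auto
  next
    case False
    have "0 \<in> R" unfolding R_def m_def by simp
    with False show ?thesis by (intro bexI[of _ 0]) auto
  qed
qed


lemma lower_sum:
  fixes a b :: "int^'n \<Rightarrow> ennreal"
  assumes m: "m > (0::nat)" and R: "finite R"
    and le: "\<And>k. a k \<le> K * (\<Sum>r\<in>R. b ((\<chi> i. int m * k$i) + r))"
  shows "infsum a UNIV \<le> K * of_nat (card R) * infsum b UNIV"
proof -
  have inj: "inj (\<lambda>k::int^'n. (\<chi> i. int m * k$i) + r)" for r
    using m by (auto simp: inj_on_def vec_eq_iff)
  have X: "(\<integral>\<^sup>+k. (\<Sum>r\<in>R. b ((\<chi> i. int m * k$i) + r)) \<partial>count_space UNIV) \<le> of_nat (card R) * infsum b UNIV"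
  proof -
    have "(\<integral>\<^sup>+k. (\<Sum>r\<in>R. b ((\<chi> i. int m * k$i) + r)) \<partial>count_space UNIV) =
       (\<Sum>r\<in>R. (\<integral>\<^sup>+k. b ((\<chi> i. int m * k$i) + r) \<partial>count_space UNIV))"
      by (rule nn_integral_sum) simp
    also have "\<dots> \<le> (\<Sum>r\<in>R. (\<integral>\<^sup>+k. b k \<partial>count_space UNIV))"
      by (intro sum_mono count_inj_le[OF inj])
    also have "\<dots> = of_nat (card R) * infsum b UNIV" by (simp add: infsum_count)
    finally show ?thesis .
  qed
  have "infsum a UNIV = (\<integral>\<^sup>+k. a k \<partial>count_space UNIV)" by (rule infsum_count)
  also have "\<dots> \<le> (\<integral>\<^sup>+k. K * (\<Sum>r\<in>R. b ((\<chi> i. int m * k$i) + r)) \<partial>count_space UNIV)"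
    by (intro nn_integral_mono le)
  also have "\<dots> = K * (\<integral>\<^sup>+k. (\<Sum>r\<in>R. b ((\<chi> i. int m * k$i) + r)) \<partial>count_space UNIV)"
    by (rule nn_integral_cmult) simp
  also have "\<dots> \<le> K * (of_nat (card R) * infsum b UNIV)" by (rule mult_left_mono[OF X]) simp
  finally show ?thesis by (simp add: ac_simps)
qed

lemma bounds:
  fixes f :: "real^'n \<Rightarrow> real"
  assumes \<Phi>: "orlicz_function \<Phi>" and C0: "C0 > 0" and p: "p > 0" and q: "q > 0"
    and lt: "\<forall>\<tau>\<ge>0. \<forall>s. 0 < s \<and> s < 1 \<longrightarrow> \<Phi> (s * \<tau>) \<le> C0 * s powr p * \<Phi> \<tau>"
    and t: "t > 0" and fm: "f \<in> borel_measurable lebesgue"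
  defines "J \<equiv> {j :: int^'n. \<forall>i. j$i \<in> {-1..1}}"
  defines "KU \<equiv> ((2 + (C0 * card J) powr (1/p)) * card J) powr q"
  defines "m \<equiv> CARD('n) + 1"
  defines "R \<equiv> {r :: int^'n. \<forall>i. r$i \<in> {0..int m - 1}}"
  defines "KL \<equiv> ((2 + (C0 * card R) powr (1/p)) * card R) powr q"
  defines "a \<equiv> \<lambda>k. ennpow (orlicz_norm \<Phi> (\<lambda>y. f y * indicator (cube t k) y)) q"
  defines "g \<equiv> \<lambda>x. ennpow (orlicz_norm \<Phi> (\<lambda>y. f y * indicator (ball x t) y)) q"
  shows "\<exists>h \<in> borel_measurable lebesgue. (\<forall>x. g x \<le> h x) \<and>
           (\<integral>\<^sup>+x. h x \<partial>lebesgue) = ennreal (KU * card J) * (ennreal (t ^ CARD('n)) * infsum a UNIV)"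
    and "\<exists>\<phi> \<in> borel_measurable lebesgue. (\<forall>x. \<phi> x \<le> g x) \<and>
           ennreal (t ^ CARD('n)) * infsum a UNIV \<le> ennreal (KL * card R * real m ^ CARD('n)) * (\<integral>\<^sup>+x. \<phi> x \<partial>lebesgue)"
proof -
  have J: "finite J" unfolding J_def by (rule finite_vec_box) simp
  have KU: "KU \<ge> 0" unfolding KU_def by simp
  define h where "h = (\<lambda>x. ennreal KU * (\<Sum>j\<in>J. a (cidx t x + j)))"
  have "h \<in> borel_measurable lebesgue"
    using meas_F_cidx[OF t, of "\<lambda>k. ennreal KU * (\<Sum>j\<in>J. a (k + j))"] unfolding h_def by simp
  moreover have "\<forall>x. g x \<le> h x"
    unfolding g_def h_def a_def KU_def J_def using upper_pt[OF \<Phi> C0 p q lt t fm] by blast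
  moreover have "(\<integral>\<^sup>+x. h x \<partial>lebesgue) = ennreal (KU * card J) * (ennreal (t ^ CARD('n)) * infsum a UNIV)"
    unfolding h_def using upper_int[OF t J, of "ennreal KU" a] KU
    by (simp add: ennreal_mult ennreal_of_nat_eq_real_of_nat)
  ultimately show "\<exists>h \<in> borel_measurable lebesgue. (\<forall>x. g x \<le> h x) \<and>
           (\<integral>\<^sup>+x. h x \<partial>lebesgue) = ennreal (KU * card J) * (ennreal (t ^ CARD('n)) * infsum a UNIV)"
    by blast
next
  have m: "m > 0" unfolding m_def by simp
  define s where "s = t / m"
  have s: "s > 0" unfolding s_def using t m by simp
  have R: "finite R" unfolding R_def by (rule finite_vec_box) simp
  have KL: "KL \<ge> 0" unfolding KL_def by simp
  define b where "b = (\<lambda>k. ennpow (orlicz_norm \<Phi> (\<lambda>y. f y * indicator (cube s k) y)) q)"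
  define \<phi> where "\<phi> = (\<lambda>x. b (cidx s x))"
  have "\<phi> \<in> borel_measurable lebesgue" unfolding \<phi>_def by (rule meas_F_cidx[OF s])
  moreover have "\<forall>x. \<phi> x \<le> g x"
  proof
    fix x :: "real^'n"
    have "x \<in> cube s (cidx s x)" by (rule cube_cidx[OF s])
    then have sub: "cube s (cidx s x) \<subseteq> ball x t" unfolding s_def m_def by (intro small_cube_in_ball t) (simp add: add.commute)
    have "orlicz_norm \<Phi> (\<lambda>y. f y * indicator (cube s (cidx s x)) y) \<le> orlicz_norm \<Phi> (\<lambda>y. f y * indicator (ball x t) y)"
      by (rule N_mono[OF \<Phi>]) (use sub in \<open>auto split: split_indicator\<close>)
    then show "\<phi> x \<le> g x" unfolding \<phi>_def b_def g_def using q by (intro ennpow_mono) auto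
  qed
  moreover have "ennreal (t ^ CARD('n)) * infsum a UNIV \<le> ennreal (KL * card R * real m ^ CARD('n)) * (\<integral>\<^sup>+x. \<phi> x \<partial>lebesgue)"
  proof -
    have "infsum a UNIV \<le> ennreal KL * of_nat (card R) * infsum b UNIV"
    proof (rule lower_sum[OF m R])
      fix k
      show "a k \<le> ennreal KL * (\<Sum>r\<in>R. b ((\<chi> i. int m * k$i) + r))"
        unfolding a_def b_def KL_def R_def s_def m_def using lower_pt[OF \<Phi> C0 p q lt t fm, of k] by simp
    qed
    then have le: "ennreal (t ^ CARD('n)) * infsum a UNIV \<le> ennreal (t ^ CARD('n)) * (ennreal KL * of_nat (card R) * infsum b UNIV)"
      by (rule mult_left_mono) simp
    have e1: "ennreal (t ^ CARD('n)) = ennreal (real m ^ CARD('n)) * ennreal (s ^ CARD('n))"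
      unfolding s_def using t m by (simp add: ennreal_mult[symmetric] power_mult_distrib[symmetric])
    have e2: "(\<integral>\<^sup>+x. \<phi> x \<partial>lebesgue) = ennreal (s ^ CARD('n)) * infsum b UNIV"
      unfolding \<phi>_def by (rule integral_cidx[OF s])
    have e3: "ennreal (KL * card R * real m ^ CARD('n)) = ennreal KL * of_nat (card R) * ennreal (real m ^ CARD('n))"
      using KL by (simp add: ennreal_mult ennreal_of_nat_eq_real_of_nat)
    have "ennreal (t ^ CARD('n)) * (ennreal KL * of_nat (card R) * infsum b UNIV) =
          ennreal (KL * card R * real m ^ CARD('n)) * (\<integral>\<^sup>+x. \<phi> x \<partial>lebesgue)"
      unfolding e1 e2 e3 by (simp add: ac_simps)
    with le show ?thesis by simp
  qed
  ultimately show "\<exists>\<phi> \<in> borel_measurable lebesgue. (\<forall>x. \<phi> x \<le> g x) \<and>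
           ennreal (t ^ CARD('n)) * infsum a UNIV \<le> ennreal (KL * card R * real m ^ CARD('n)) * (\<integral>\<^sup>+x. \<phi> x \<partial>lebesgue)"
    by blast
qed


lemma ennpow_div_const:
  assumes c: "c > 0" and q: "q > 0"
  shows "ennpow (X / ennreal c) q = ennreal ((1/c) powr q) * ennpow X q"
proof -
  have "X / ennreal c = ennreal (1/c) * X"
    using c by (simp add: divide_ennreal_def inverse_ennreal mult.commute inverse_eq_divide)
  then show ?thesis using c q by (simp add: ennpow_cmult)
qed

theorem proposition2p12:
  fixes \<Phi> :: "real \<Rightarrow> real" and q :: real
  assumes "orlicz_function \<Phi>"
    and "\<exists>p>0. lower_type \<Phi> p"
    and "\<exists>p>0. upper_type \<Phi> p"
    and "q > 0"
  shows "(\<forall>t>0. (E_space \<Phi> q t :: (real^'n \<Rightarrow> real) set) = amalgam_space \<Phi> q t) \<and>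
    (\<exists>C>0. \<forall>t>0. \<forall>f \<in> (E_space \<Phi> q t :: (real^'n \<Rightarrow> real) set).
       ennpow (ennreal (t ^ CARD('n)) *
           (\<Sum>\<^sub>\<infinity>k\<in>UNIV. ennpow (orlicz_norm \<Phi> (\<lambda>y. f y * indicator (cube t k) y)) q)) (1 / q)
         \<le> ennreal C * ennpow (\<integral>\<^sup>+ x. ennpow (orlicz_norm \<Phi> (\<lambda>y. f y * indicator (ball x t) y)) q \<partial>lebesgue) (1 / q)
     \<and> ennpow (\<integral>\<^sup>+ x. ennpow (orlicz_norm \<Phi> (\<lambda>y. f y * indicator (ball x t) y)) q \<partial>lebesgue) (1 / q)
         \<le> ennreal C * ennpow (ennreal (t ^ CARD('n)) *
           (\<Sum>\<^sub>\<infinity>k\<in>UNIV. ennpow (orlicz_norm \<Phi> (\<lambda>y. f y * indicator (cube t k) y)) q)) (1 / q))"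
proof -
  note \<Phi> = assms(1) and q = assms(4)
  from assms(2) obtain p where p: "p > 0" "lower_type \<Phi> p" by blast
  then obtain C0 where C0: "C0 > 0"
    and lt: "\<forall>\<tau>\<ge>0. \<forall>s. 0 < s \<and> s < 1 \<longrightarrow> \<Phi> (s * \<tau>) \<le> C0 * s powr p * \<Phi> \<tau>"
    unfolding lower_type_def by blast
  define J where "J \<equiv> {j :: int^'n. \<forall>i. j$i \<in> {-1..1}}"
  define KU where "KU \<equiv> ((2 + (C0 * card J) powr (1/p)) * card J) powr q"
  define m where "m \<equiv> CARD('n) + 1"
  define R where "R \<equiv> {r :: int^'n. \<forall>i. r$i \<in> {0..int m - 1}}"
  define KL where "KL \<equiv> ((2 + (C0 * card R) powr (1/p)) * card R) powr q"
  define AU where "AU = KU * card J"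
  define AL where "AL = KL * card R * real m ^ CARD('n)"
  have AU: "AU \<ge> 0" unfolding AU_def KU_def by simp
  have AL: "AL \<ge> 0" unfolding AL_def KL_def by simp
  have keyU: "\<exists>h \<in> borel_measurable lebesgue. (\<forall>x. ennpow (orlicz_norm \<Phi> (\<lambda>y. f y * indicator (ball x t) y)) q \<le> h x) \<and>
           (\<integral>\<^sup>+x. h x \<partial>lebesgue) = ennreal AU * (ennreal (t ^ CARD('n)) *
              (\<Sum>\<^sub>\<infinity>k\<in>UNIV. ennpow (orlicz_norm \<Phi> (\<lambda>y. f y * indicator (cube t k) y)) q))"
    if t: "t > 0" and fm: "f \<in> borel_measurable lebesgue" for t and f :: "real^'n \<Rightarrow> real"
    using bounds(1)[OF \<Phi> C0 p(1) q lt t fm] unfolding AU_def KU_def J_def by simp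
  have keyL: "\<exists>\<phi> \<in> borel_measurable lebesgue. (\<forall>x. \<phi> x \<le> ennpow (orlicz_norm \<Phi> (\<lambda>y. f y * indicator (ball x t) y)) q) \<and>
           ennreal (t ^ CARD('n)) * (\<Sum>\<^sub>\<infinity>k\<in>UNIV. ennpow (orlicz_norm \<Phi> (\<lambda>y. f y * indicator (cube t k) y)) q)
             \<le> ennreal AL * (\<integral>\<^sup>+x. \<phi> x \<partial>lebesgue)"
    if t: "t > 0" and fm: "f \<in> borel_measurable lebesgue" for t and f :: "real^'n \<Rightarrow> real"
    using bounds(2)[OF \<Phi> C0 p(1) q lt t fm] unfolding AL_def KL_def R_def m_def by simp
  show ?thesis
  proof
    show "\<forall>t>0. (E_space \<Phi> q t :: (real^'n \<Rightarrow> real) set) = amalgam_space \<Phi> q t"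
    proof (intro allI impI set_eqI)
      fix t :: real and f :: "real^'n \<Rightarrow> real"
      assume t: "t > 0"
      define a where "a = (\<Sum>\<^sub>\<infinity>k\<in>UNIV. ennpow (orlicz_norm \<Phi> (\<lambda>y. f y * indicator (cube t k) y)) q)"
      define g where "g = (\<lambda>x. ennpow (orlicz_norm \<Phi> (\<lambda>y. f y * indicator (ball x t) y)) q)"
      define cB where "cB = orlicz_norm \<Phi> (indicator (ball (0::real^'n) t) :: real^'n \<Rightarrow> real)"
      have cB: "0 < cB" "cB < top"
        unfolding cB_def using N_indicator_ball_pos_fin[OF \<Phi> t C0 p(1) lt] by auto
      then obtain c where c: "cB = ennreal c" "c > 0" by (cases cB rule: ennreal_cases) auto
      define w where "w = ennreal ((1/c) powr q)"
      have w: "0 < w" "w < top" unfolding w_def using c by auto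
      have Eeq: "E_norm \<Phi> q t f = ennpow (\<integral>\<^sup>+x. w * g x \<partial>lebesgue) (1/q)"
      proof -
        have pt: "orlicz_norm \<Phi> (indicator (ball x t) :: real^'n \<Rightarrow> real) = ennreal c" for x
          using N_indicator_ball_const[OF \<Phi> t, of x] c(1) unfolding cB_def by simp
        have "(\<lambda>x. ennpow (orlicz_norm \<Phi> (\<lambda>y. f y * indicator (ball x t) y) /
                 orlicz_norm \<Phi> (indicator (ball x t) :: real^'n \<Rightarrow> real)) q) = (\<lambda>x. w * g x)"
          unfolding pt ennpow_div_const[OF c(2) q] w_def g_def by simp
        then show ?thesis unfolding E_norm_def by simp
      qed
      have Aeq: "amalgam_norm \<Phi> q t f = ennpow a (1/q)" unfolding amalgam_norm_def a_def by simp
      show "f \<in> E_space \<Phi> q t \<longleftrightarrow> f \<in> amalgam_space \<Phi> q t"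
      proof (cases "f \<in> borel_measurable lebesgue")
        case False then show ?thesis unfolding E_space_def amalgam_space_def by simp
      next
        case fm: True
        obtain h where h: "h \<in> borel_measurable lebesgue" "\<And>x. g x \<le> h x"
            "(\<integral>\<^sup>+x. h x \<partial>lebesgue) = ennreal AU * (ennreal (t ^ CARD('n)) * a)"
          using keyU[OF t fm] unfolding g_def a_def by blast
        obtain \<phi> where \<phi>: "\<phi> \<in> borel_measurable lebesgue" "\<And>x. \<phi> x \<le> g x"
            "ennreal (t ^ CARD('n)) * a \<le> ennreal AL * (\<integral>\<^sup>+x. \<phi> x \<partial>lebesgue)"
          using keyL[OF t fm] unfolding g_def a_def by blast
        have "(\<integral>\<^sup>+x. w * g x \<partial>lebesgue) < top \<longleftrightarrow> a < top"
        proof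
          assume fin: "(\<integral>\<^sup>+x. w * g x \<partial>lebesgue) < top"
          have "w * (\<integral>\<^sup>+x. \<phi> x \<partial>lebesgue) = (\<integral>\<^sup>+x. w * \<phi> x \<partial>lebesgue)"
            using \<phi>(1) by (rule nn_integral_cmult[symmetric])
          also have "\<dots> \<le> (\<integral>\<^sup>+x. w * g x \<partial>lebesgue)" by (intro nn_integral_mono mult_left_mono \<phi>(2)) simp
          finally have "w * (\<integral>\<^sup>+x. \<phi> x \<partial>lebesgue) < top" using fin by (rule le_less_trans)
          then have "(\<integral>\<^sup>+x. \<phi> x \<partial>lebesgue) < top" using w by (auto simp: ennreal_mult_less_top top.not_eq_extremum)
          then have "ennreal AL * (\<integral>\<^sup>+x. \<phi> x \<partial>lebesgue) < top" by (simp add: ennreal_mult_less_top)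
          with \<phi>(3) have "ennreal (t ^ CARD('n)) * a < top" by (rule le_less_trans)
          then show "a < top" using t by (auto simp: ennreal_mult_less_top top.not_eq_extremum)
        next
          assume fin: "a < top"
          have "(\<integral>\<^sup>+x. w * g x \<partial>lebesgue) \<le> (\<integral>\<^sup>+x. w * h x \<partial>lebesgue)"
            by (intro nn_integral_mono mult_left_mono h(2)) simp
          also have "\<dots> = w * (ennreal AU * (ennreal (t ^ CARD('n)) * a))"
            using h(1) h(3) by (simp add: nn_integral_cmult)
          also have "\<dots> < top" using w fin by (simp add: ennreal_mult_less_top)
          finally show "(\<integral>\<^sup>+x. w * g x \<partial>lebesgue) < top" .
        qed
        then show ?thesis unfolding E_space_def amalgam_space_def using fm Eeq Aeq
          by (simp add: ennpow_less_top)
      qed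
    qed
  next
    define C where "C = max (AU powr (1/q)) (AL powr (1/q)) + 1"
    have C: "C > 0" unfolding C_def by (smt (verit) max.cobounded1 powr_ge_zero)
    show "\<exists>C>0. \<forall>t>0. \<forall>f \<in> (E_space \<Phi> q t :: (real^'n \<Rightarrow> real) set).
       ennpow (ennreal (t ^ CARD('n)) *
           (\<Sum>\<^sub>\<infinity>k\<in>UNIV. ennpow (orlicz_norm \<Phi> (\<lambda>y. f y * indicator (cube t k) y)) q)) (1 / q)
         \<le> ennreal C * ennpow (\<integral>\<^sup>+ x. ennpow (orlicz_norm \<Phi> (\<lambda>y. f y * indicator (ball x t) y)) q \<partial>lebesgue) (1 / q)
     \<and> ennpow (\<integral>\<^sup>+ x. ennpow (orlicz_norm \<Phi> (\<lambda>y. f y * indicator (ball x t) y)) q \<partial>lebesgue) (1 / q)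
         \<le> ennreal C * ennpow (ennreal (t ^ CARD('n)) *
           (\<Sum>\<^sub>\<infinity>k\<in>UNIV. ennpow (orlicz_norm \<Phi> (\<lambda>y. f y * indicator (cube t k) y)) q)) (1 / q)"
    proof (intro exI[of _ C] conjI allI impI ballI C)
      fix t :: real and f :: "real^'n \<Rightarrow> real"
      assume t: "t > 0" and fE: "f \<in> E_space \<Phi> q t"
      have fm: "f \<in> borel_measurable lebesgue" using fE unfolding E_space_def by simp
      define S where "S = ennreal (t ^ CARD('n)) * (\<Sum>\<^sub>\<infinity>k\<in>UNIV. ennpow (orlicz_norm \<Phi> (\<lambda>y. f y * indicator (cube t k) y)) q)"
      define G where "G = (\<integral>\<^sup>+ x. ennpow (orlicz_norm \<Phi> (\<lambda>y. f y * indicator (ball x t) y)) q \<partial>lebesgue)"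
      obtain h where h: "h \<in> borel_measurable lebesgue" "\<And>x. ennpow (orlicz_norm \<Phi> (\<lambda>y. f y * indicator (ball x t) y)) q \<le> h x"
          "(\<integral>\<^sup>+x. h x \<partial>lebesgue) = ennreal AU * S"
        using keyU[OF t fm] unfolding S_def by blast
      obtain \<phi> where \<phi>: "\<phi> \<in> borel_measurable lebesgue" "\<And>x. \<phi> x \<le> ennpow (orlicz_norm \<Phi> (\<lambda>y. f y * indicator (ball x t) y)) q"
          "S \<le> ennreal AL * (\<integral>\<^sup>+x. \<phi> x \<partial>lebesgue)"
        using keyL[OF t fm] unfolding S_def by blast
      have q1: "1/q > 0" using q by simp
      have "S \<le> ennreal AL * G"
      proof -
        have "(\<integral>\<^sup>+x. \<phi> x \<partial>lebesgue) \<le> G" unfolding G_def by (intro nn_integral_mono \<phi>(2))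
        then show ?thesis using \<phi>(3) by (meson mult_left_mono order_trans zero_le)
      qed
      then have "ennpow S (1/q) \<le> ennpow (ennreal AL * G) (1/q)" using q1 by (intro ennpow_mono) auto
      also have "\<dots> = ennreal (AL powr (1/q)) * ennpow G (1/q)" using AL q1 by (rule ennpow_cmult)
      also have "\<dots> \<le> ennreal C * ennpow G (1/q)"
        unfolding C_def by (intro mult_right_mono ennreal_leI) auto
      finally show "ennpow S (1/q) \<le> ennreal C * ennpow G (1/q)" .
      have "G \<le> ennreal AU * S" unfolding G_def h(3)[symmetric] by (intro nn_integral_mono h(2))
      then have "ennpow G (1/q) \<le> ennpow (ennreal AU * S) (1/q)" using q1 by (intro ennpow_mono) auto
      also have "\<dots> = ennreal (AU powr (1/q)) * ennpow S (1/q)" using AU q1 by (rule ennpow_cmult)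
      also have "\<dots> \<le> ennreal C * ennpow S (1/q)"
        unfolding C_def by (intro mult_right_mono ennreal_leI) auto
      finally show "ennpow G (1/q) \<le> ennreal C * ennpow S (1/q)" .
    qed
  qed
qed

end
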